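(* Let $H:\mathbb{R}_+\to[0,1]$ be a measurable function with $\|H\|_1:=\int_0^\infty H(x)\,dx<\infty$ and $\|H\|_2^2:=\int_0^\infty H(x)^2\,dx<\|H\|_1$. Fix $\tau>0$ and $\alpha>0$. For positive integers $L$ set $R_L=\ln(\tau L)/(2\|H\|_1)$. Let $\mathcal{P}_L$ be a Poisson point process of unit intensity on the torus $[0,L]$ (with $0$ and $L$ identified), with circular distance $\rho^L(x,y)=\min\{|x-y|,L-|x-y|\}$, and let $\tilde h^L(x,y)=H(\rho^L(x,y)/R_L)\mathbb{1}\{\rho^L(x,y)\le R_L^{1+1/\alpha}\}$. Let $\mathcal{G}_{\tilde h^L}(\mathcal{P}_L)$ be the random graph on vertex set $\mathcal{P}_L$ in which, conditionally on $\mathcal{P}_L$, each pair of distinct nodes $x,y$ is joined by an edge with probability $\tilde h^L(x,y)$, independently over pairs. For $m\in\mathbb{N}$, divide the torus into segments $A_i=[(i-1)/m,i/m)$, $i\in\Gamma=\{1,\dots,mL\}$, with centres $x_i$, and let $I_i$ be the indicator that $A_i$ contains exactly one node of $\mathcal{P}_L$ and that node is isolated in $\mathcal{G}_{\tilde h^L}(\mathcal{P}_L)$. Let $B_i=\{j\in\Gamma:\rho^L(x_i,x_j)\le 3R_L^{1+1/\alpha}\}$, $p_i=\mathbb{E}[I_i]$, and $b_1=\sum_{i\in\Gamma}\sum_{j\in B_i}p_ip_j$ (which depends on $m$ and $L$). Then $b_1$ tends to zero as $m\to\infty$ followed by $L\to\infty$, i.e. $\lim_{L\to\infty}\limsup_{m\to\infty}b_1=0$.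 *)

theory Defs
  imports "HOL-Analysis.Analysis" "HOL-Probability.Probability" "HOL-Probability.Product_PMF"
begin

definition torus_dist :: "real \<Rightarrow> real \<Rightarrow> real \<Rightarrow> real" where
  "torus_dist L x y = min \<bar>x - y\<bar> (L - \<bar>x - y\<bar>)"

definition L1norm :: "(real \<Rightarrow> real) \<Rightarrow> real" where
  "L1norm H = (LBINT x:{0..}. H x)"

definition RL :: "(real \<Rightarrow> real) \<Rightarrow> real \<Rightarrow> nat \<Rightarrow> real" where
  "RL H tau L = ln (tau * real L) / (2 * L1norm H)"

definition hL :: "(real \<Rightarrow> real) \<Rightarrow> real \<Rightarrow> real \<Rightarrow> nat \<Rightarrow> real \<Rightarrow> real \<Rightarrow> real" where
  "hL H tau alpha L x y =
     H (torus_dist (real L) x y / RL H tau L) *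
     (if torus_dist (real L) x y \<le> RL H tau L powr (1 + 1 / alpha) then 1 else 0)"

definition seg :: "nat \<Rightarrow> nat \<Rightarrow> real set" where
  "seg m i = {(real i - 1) / real m ..< real i / real m}"

definition centre :: "nat \<Rightarrow> nat \<Rightarrow> real" where
  "centre m i = (real i - 1 / 2) / real m"

text \<open>Unit-intensity Poisson process on [0,L): N ~ Poisson(L) points,
  positions i.i.d. uniform on [0,L).\<close>
definition point_positions :: "nat \<Rightarrow> nat \<Rightarrow> (nat \<Rightarrow> real) measure" where
  "point_positions L n = PiM {..<n} (\<lambda>_. uniform_measure lborel {0..<real L})"

text \<open>Conditionally on the points xs 0, ..., xs (n-1), each unordered pair {a,b}
  (encoded as (a,b) with a < b) is an edge independently with probability hL.\<close>
definition edge_pmf ::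
  "(real \<Rightarrow> real) \<Rightarrow> real \<Rightarrow> real \<Rightarrow> nat \<Rightarrow> nat \<Rightarrow> (nat \<Rightarrow> real) \<Rightarrow> (nat \<times> nat \<Rightarrow> bool) pmf" where
  "edge_pmf H tau alpha L n xs =
     Pi_pmf {(a, b). a < b \<and> b < n} False
       (\<lambda>(a, b). bernoulli_pmf (hL H tau alpha L (xs a) (xs b)))"

definition single_isolated ::
  "real set \<Rightarrow> nat \<Rightarrow> (nat \<Rightarrow> real) \<Rightarrow> (nat \<times> nat \<Rightarrow> bool) \<Rightarrow> bool" where
  "single_isolated A n xs E \<longleftrightarrow>
     (\<exists>k<n. xs k \<in> A \<and> (\<forall>j<n. j \<noteq> k \<longrightarrow> xs j \<notin> A)
            \<and> (\<forall>j<n. j \<noteq> k \<longrightarrow> \<not> E (min k j, max k j)))"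

definition p_iso :: "(real \<Rightarrow> real) \<Rightarrow> real \<Rightarrow> real \<Rightarrow> nat \<Rightarrow> nat \<Rightarrow> nat \<Rightarrow> real" where
  "p_iso H tau alpha m L i =
     (\<Sum>n. pmf (poisson_pmf (real L)) n *
        (\<integral>xs. measure_pmf.prob (edge_pmf H tau alpha L n xs)
                 {E. single_isolated (seg m i) n xs E} \<partial>point_positions L n))"

definition Gamma_idx :: "nat \<Rightarrow> nat \<Rightarrow> nat set" where
  "Gamma_idx m L = {1 .. m * L}"

definition B_idx :: "(real \<Rightarrow> real) \<Rightarrow> real \<Rightarrow> real \<Rightarrow> nat \<Rightarrow> nat \<Rightarrow> nat \<Rightarrow> nat set" where
  "B_idx H tau alpha m L i =
     {j \<in> Gamma_idx m L. torus_dist (real L) (centre m i) (centre m j)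
                          \<le> 3 * RL H tau L powr (1 + 1 / alpha)}"

definition b1 :: "(real \<Rightarrow> real) \<Rightarrow> real \<Rightarrow> real \<Rightarrow> nat \<Rightarrow> nat \<Rightarrow> real" where
  "b1 H tau alpha m L =
     (\<Sum>i\<in>Gamma_idx m L. \<Sum>j\<in>B_idx H tau alpha m L i.
        p_iso H tau alpha m L i * p_iso H tau alpha m L j)"

end

theory Submission
  imports Defs "HOL-Real_Asymp.Real_Asymp"
begin


definition clip :: "real \<Rightarrow> real" where "clip p = min 1 (max 0 p)"

lemma pmf_bernoulli_False_clip: "pmf (bernoulli_pmf p) False = 1 - clip p"
  by (simp add: bernoulli_pmf.rep_eq clip_def)

lemma torus_dist_sym: "torus_dist L x y = torus_dist L y x"
  unfolding torus_dist_def by (simp add: abs_minus_commute)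

lemma hL_sym: "hL H tau alpha L x y = hL H tau alpha L y x"
  unfolding hL_def by (simp add: torus_dist_sym)

lemma prob_single_isolated_le:
  "measure_pmf.prob (edge_pmf H tau alpha L n xs) {E. single_isolated A n xs E}
   \<le> (\<Sum>k<n. indicator A (xs k) * (\<Prod>j\<in>{..<n}-{k}. (1 - clip (hL H tau alpha L (xs k) (xs j)))))"
proof -
  let ?P = "edge_pmf H tau alpha L n xs"
  let ?S = "{(a, b). a < b \<and> b < n}"
  define Ev where "Ev k = {E. \<forall>j<n. j \<noteq> k \<longrightarrow> \<not> E (min k j, max k j)}" for k
  define K where "K = {k. k < n \<and> xs k \<in> A}"
  have sub: "{E. single_isolated A n xs E} \<subseteq> (\<Union>k\<in>K. Ev k)"
    unfolding single_isolated_def K_def Ev_def by blast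
  have "measure_pmf.prob ?P {E. single_isolated A n xs E} \<le> measure_pmf.prob ?P (\<Union>k\<in>K. Ev k)"
    by (rule measure_pmf.finite_measure_mono[OF sub]) simp
  also have "\<dots> \<le> (\<Sum>k\<in>K. measure_pmf.prob ?P (Ev k))"
    by (rule measure_pmf.finite_measure_subadditive_finite) (auto simp: K_def)
  also have "\<dots> = (\<Sum>k<n. indicator A (xs k) * measure_pmf.prob ?P (Ev k))"
  proof -
    have "(\<Sum>k\<in>K. measure_pmf.prob ?P (Ev k)) = (\<Sum>k\<in>{..<n}. if xs k \<in> A then measure_pmf.prob ?P (Ev k) else 0)"
      unfolding K_def by (rule sum.mono_neutral_cong_left) auto
    also have "\<dots> = (\<Sum>k<n. indicator A (xs k) * measure_pmf.prob ?P (Ev k))"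
      by (rule sum.cong[OF refl]) (simp add: indicator_def)
    finally show ?thesis .
  qed
  also have "\<dots> = (\<Sum>k<n. indicator A (xs k) * (\<Prod>j\<in>{..<n}-{k}. (1 - clip (hL H tau alpha L (xs k) (xs j)))))"
  proof (rule sum.cong[OF refl])
    fix k assume k: "k \<in> {..<n}"
    define Pk where "Pk = (\<lambda>j. (min k j, max k j)) ` ({..<n}-{k})"
    define B where "B e = (if e \<in> Pk then {False} else UNIV)" for e :: "nat \<times> nat"
    have PkS: "Pk \<subseteq> ?S" using k unfolding Pk_def by auto
    have EvPi: "Ev k = Pi ?S B"
      using PkS unfolding Ev_def B_def Pk_def Pi_def by (auto split: if_splits)
    have fin: "finite ?S"
      by (rule finite_subset[of _ "{..<n} \<times> {..<n}"]) auto
    have "measure_pmf.prob ?P (Ev k) = (\<Prod>e\<in>?S. measure_pmf.prob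
           ((\<lambda>(a, b). bernoulli_pmf (hL H tau alpha L (xs a) (xs b))) e) (B e))"
      unfolding EvPi edge_pmf_def by (rule measure_Pi_pmf_Pi[OF fin])
    also have "\<dots> = (\<Prod>e\<in>Pk. measure_pmf.prob
           ((\<lambda>(a, b). bernoulli_pmf (hL H tau alpha L (xs a) (xs b))) e) {False})"
      by (rule sym, rule prod.mono_neutral_cong_left[OF fin PkS]) (auto simp: B_def)
    also have "\<dots> = (\<Prod>j\<in>{..<n}-{k}. measure_pmf.prob
           (bernoulli_pmf (hL H tau alpha L (xs (min k j)) (xs (max k j)))) {False})"
      unfolding Pk_def
      by (subst prod.reindex) (auto simp: inj_on_def min_def max_def split: if_splits)
    also have "\<dots> = (\<Prod>j\<in>{..<n}-{k}. (1 - clip (hL H tau alpha L (xs k) (xs j))))"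
    proof (rule prod.cong[OF refl])
      fix j
      have "hL H tau alpha L (xs (min k j)) (xs (max k j)) = hL H tau alpha L (xs k) (xs j)"
        by (cases "k \<le> j") (auto simp: min_def max_def hL_sym)
      then show "measure_pmf.prob (bernoulli_pmf (hL H tau alpha L (xs (min k j)) (xs (max k j)))) {False}
          = 1 - clip (hL H tau alpha L (xs k) (xs j))"
        by (simp add: measure_pmf_single pmf_bernoulli_False_clip)
    qed
    finally show "indicator A (xs k) * measure_pmf.prob ?P (Ev k) =
        indicator A (xs k) * (\<Prod>j\<in>{..<n}-{k}. (1 - clip (hL H tau alpha L (xs k) (xs j))))" by simp
  qed
  finally show ?thesis .
qed



lemma klb:
  fixes H' :: "real \<Rightarrow> real" and R D L y :: real
  assumes Hm[measurable]: "H' \<in> borel_measurable borel"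
    and Hb: "\<And>s. 0 \<le> H' s \<and> H' s \<le> 1"
    and R: "R > 0" and D: "0 \<le> D" "D < L/2" and y: "0 \<le> y" "y < L"
  shows "ennreal (2*R) * (\<integral>\<^sup>+u. ennreal (H' u * indicator {0<..D/R} u) \<partial>lborel)
     \<le> (\<integral>\<^sup>+z. ennreal (clip (H' (torus_dist L y z / R) * (if torus_dist L y z \<le> D then 1 else 0))
            * indicator {0..<L} z) \<partial>lborel)"
proof -
  define \<psi> where "\<psi> t = ennreal (H' (\<bar>t\<bar>/R) * indicator {-D..D} t)" for t
  define \<psi>1 where "\<psi>1 t = ennreal (H' (t/R) * indicator {0<..D} t)" for t
  have [measurable]: "\<psi> \<in> borel_measurable borel" unfolding \<psi>_def by measurable
  have [measurable]: "\<psi>1 \<in> borel_measurable borel" unfolding \<psi>1_def by measurable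
  have clipH: "clip (H' s * c) = H' s * c" if "c = 0 \<or> c = 1" for s c
    using Hb[of s] that by (auto simp: clip_def)
  have clipH1: "clip (H' s) = H' s" for s
    using Hb[of s] by (auto simp: clip_def)
  have pw: "(\<psi> (z-y) + \<psi> (z-y+L) + \<psi> (z-y-L)) * indicator {0..<L} z
      \<le> ennreal (clip (H' (torus_dist L y z / R) * (if torus_dist L y z \<le> D then 1 else 0))
            * indicator {0..<L} z)" for z
  proof (cases "z \<in> {0..<L}")
    case False then show ?thesis by simp
  next
    case True
    then have z: "0 \<le> z" "z < L" by auto
    let ?d = "z - y"
    show ?thesis
    proof (cases "\<bar>?d\<bar> \<le> D")
      case True
      then have td: "torus_dist L y z = \<bar>?d\<bar>" using D unfolding torus_dist_def by (auto simp: abs_minus_commute)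
      have "\<psi> (z-y+L) = 0" "\<psi> (z-y-L) = 0" using True D y z unfolding \<psi>_def by (auto simp: indicator_def)
      then show ?thesis using True td z unfolding \<psi>_def by (simp add: clipH clipH1 indicator_def)
    next
      case False
      have "\<psi> (z-y) = 0" using False unfolding \<psi>_def by (auto simp: indicator_def)
      moreover have "\<psi> (z-y+L) + \<psi> (z-y-L) \<le> ennreal (clip (H' (torus_dist L y z / R) * (if torus_dist L y z \<le> D then 1 else 0)))"
      proof (cases "?d > 0")
        case True
        have "\<psi> (z-y+L) = 0" using True D unfolding \<psi>_def by (auto simp: indicator_def)
        moreover have "\<psi> (z-y-L) \<le> ennreal (clip (H' (torus_dist L y z / R) * (if torus_dist L y z \<le> D then 1 else 0)))"
        proof (cases "L - ?d \<le> D")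
          case c: True
          then have td: "torus_dist L y z = L - ?d" using True False D unfolding torus_dist_def by auto
          have "\<bar>z-y-L\<bar> = L - ?d" using z y by auto
          then show ?thesis using c td unfolding \<psi>_def by (simp add: clipH clipH1 indicator_def)
        next
          case c: False
          then have "\<psi> (z-y-L) = 0" using z y unfolding \<psi>_def by (auto simp: indicator_def)
          then show ?thesis by simp
        qed
        ultimately show ?thesis by simp
      next
        case nt: False
        have "\<psi> (z-y-L) = 0" using nt D y z unfolding \<psi>_def by (auto simp: indicator_def)
        moreover have "\<psi> (z-y+L) \<le> ennreal (clip (H' (torus_dist L y z / R) * (if torus_dist L y z \<le> D then 1 else 0)))"
        proof (cases "L + ?d \<le> D")
          case c: True
          then have td: "torus_dist L y z = L + ?d" using nt False D unfolding torus_dist_def by auto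
          have "\<bar>z-y+L\<bar> = L + ?d" using z y by auto
          then show ?thesis using c td unfolding \<psi>_def by (simp add: clipH clipH1 indicator_def)
        next
          case c: False
          then have "\<psi> (z-y+L) = 0" using z y unfolding \<psi>_def by (auto simp: indicator_def)
          then show ?thesis by simp
        qed
        ultimately show ?thesis by simp
      qed
      ultimately show ?thesis using True by simp
    qed
  qed
  have shift: "(\<integral>\<^sup>+z. \<psi> (z - y + c) * indicator {0..<L} z \<partial>lborel)
      = (\<integral>\<^sup>+t. \<psi> t * indicator {0..<L} (y - c + t) \<partial>lborel)" for c
    by (subst nn_integral_real_affine[where c=1 and t="y - c"]) (auto simp: algebra_simps)
  have "(\<integral>\<^sup>+t. \<psi> t \<partial>lborel) \<le> (\<integral>\<^sup>+t. \<psi> t * indicator {0..<L} (y + t)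
          + \<psi> t * indicator {0..<L} (y - L + t) + \<psi> t * indicator {0..<L} (y + L + t) \<partial>lborel)"
  proof (rule nn_integral_mono)
    fix t
    show "\<psi> t \<le> \<psi> t * indicator {0..<L} (y + t) + \<psi> t * indicator {0..<L} (y - L + t) + \<psi> t * indicator {0..<L} (y + L + t)"
    proof (cases "\<bar>t\<bar> \<le> D")
      case False then have "\<psi> t = 0" unfolding \<psi>_def by (auto simp: indicator_def)
      then show ?thesis by simp
    next
      case True
      then show ?thesis using D y by (auto simp: indicator_def)
    qed
  qed
  also have "\<dots> = (\<integral>\<^sup>+t. \<psi> t * indicator {0..<L} (y - 0 + t) \<partial>lborel)
          + (\<integral>\<^sup>+t. \<psi> t * indicator {0..<L} (y - L + t) \<partial>lborel) + (\<integral>\<^sup>+t. \<psi> t * indicator {0..<L} (y - (-L) + t) \<partial>lborel)"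
  proof -
    have e1: "(\<integral>\<^sup>+t. \<psi> t * indicator {0..<L} (y + t)
          + \<psi> t * indicator {0..<L} (y - L + t) + \<psi> t * indicator {0..<L} (y + L + t) \<partial>lborel)
       = (\<integral>\<^sup>+t. \<psi> t * indicator {0..<L} (y + t)
          + \<psi> t * indicator {0..<L} (y - L + t) \<partial>lborel) + (\<integral>\<^sup>+t. \<psi> t * indicator {0..<L} (y + L + t) \<partial>lborel)"
      by (rule nn_integral_add) auto
    have e2: "(\<integral>\<^sup>+t. \<psi> t * indicator {0..<L} (y + t)
          + \<psi> t * indicator {0..<L} (y - L + t) \<partial>lborel)
       = (\<integral>\<^sup>+t. \<psi> t * indicator {0..<L} (y + t) \<partial>lborel)
          + (\<integral>\<^sup>+t. \<psi> t * indicator {0..<L} (y - L + t) \<partial>lborel)"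
      by (rule nn_integral_add) auto
    show ?thesis unfolding e1 e2 by simp
  qed
  also have "\<dots> = (\<integral>\<^sup>+z. (\<psi> (z-y) + \<psi> (z-y+L) + \<psi> (z-y-L)) * indicator {0..<L} z \<partial>lborel)"
  proof -
    have e1: "(\<integral>\<^sup>+z. (\<psi> (z-y) + \<psi> (z-y+L) + \<psi> (z-y-L)) * indicator {0..<L} z \<partial>lborel)
      = (\<integral>\<^sup>+z. \<psi> (z-y) * indicator {0..<L} z + \<psi> (z-y+L) * indicator {0..<L} z \<partial>lborel)
        + (\<integral>\<^sup>+z. \<psi> (z-y-L) * indicator {0..<L} z \<partial>lborel)"
      unfolding distrib_right by (rule nn_integral_add) auto
    have e2: "(\<integral>\<^sup>+z. \<psi> (z-y) * indicator {0..<L} z + \<psi> (z-y+L) * indicator {0..<L} z \<partial>lborel)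
      = (\<integral>\<^sup>+z. \<psi> (z-y+0) * indicator {0..<L} z \<partial>lborel) + (\<integral>\<^sup>+z. \<psi> (z-y+L) * indicator {0..<L} z \<partial>lborel)"
      by simp (rule nn_integral_add; auto)
    have e3: "(\<integral>\<^sup>+z. \<psi> (z-y-L) * indicator {0..<L} z \<partial>lborel) = (\<integral>\<^sup>+z. \<psi> (z-y+(-L)) * indicator {0..<L} z \<partial>lborel)"
      by simp
    show ?thesis unfolding e1 e2 e3 shift by simp
  qed
  also have "\<dots> \<le> (\<integral>\<^sup>+z. ennreal (clip (H' (torus_dist L y z / R) * (if torus_dist L y z \<le> D then 1 else 0))
            * indicator {0..<L} z) \<partial>lborel)"
    by (rule nn_integral_mono) (rule pw)
  finally have up: "(\<integral>\<^sup>+t. \<psi> t \<partial>lborel) \<le> \<dots>" .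
  have "(\<integral>\<^sup>+t. \<psi>1 t + \<psi>1 (-t) \<partial>lborel) \<le> (\<integral>\<^sup>+t. \<psi> t \<partial>lborel)"
  proof (rule nn_integral_mono)
    fix t
    show "\<psi>1 t + \<psi>1 (-t) \<le> \<psi> t"
      unfolding \<psi>1_def \<psi>_def using D by (cases "t > 0") (auto simp: indicator_def)
  qed
  moreover have "(\<integral>\<^sup>+t. \<psi>1 t + \<psi>1 (-t) \<partial>lborel) = (\<integral>\<^sup>+t. \<psi>1 t \<partial>lborel) + (\<integral>\<^sup>+t. \<psi>1 (-t) \<partial>lborel)"
    by (rule nn_integral_add) auto
  moreover have "(\<integral>\<^sup>+t. \<psi>1 (-t) \<partial>lborel) = (\<integral>\<^sup>+t. \<psi>1 t \<partial>lborel)"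
    by (subst nn_integral_real_affine[where c="-1" and t=0 and f=\<psi>1]) auto
  moreover have "(\<integral>\<^sup>+t. \<psi>1 t \<partial>lborel) = ennreal R * (\<integral>\<^sup>+u. ennreal (H' u * indicator {0<..D/R} u) \<partial>lborel)"
  proof -
    have "(\<integral>\<^sup>+t. \<psi>1 t \<partial>lborel) = ennreal \<bar>R\<bar> * (\<integral>\<^sup>+u. \<psi>1 (0 + R * u) \<partial>lborel)"
      by (rule nn_integral_real_affine) (use R in auto)
    also have "(\<lambda>u. \<psi>1 (0 + R * u)) = (\<lambda>u. ennreal (H' u * indicator {0<..D/R} u))"
      using R unfolding \<psi>1_def by (auto simp: indicator_def fun_eq_iff field_simps zero_less_mult_iff)
    finally show ?thesis using R by simp
  qed
  ultimately have "ennreal R * (\<integral>\<^sup>+u. ennreal (H' u * indicator {0<..D/R} u) \<partial>lborel)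
      + ennreal R * (\<integral>\<^sup>+u. ennreal (H' u * indicator {0<..D/R} u) \<partial>lborel) \<le> (\<integral>\<^sup>+t. \<psi> t \<partial>lborel)"
    by simp
  moreover have "ennreal (2*R) = ennreal R + ennreal R" using R by (simp flip: ennreal_plus)
  ultimately show ?thesis using up by (simp add: distrib_right)
qed



lemma prod_mono_ennreal:
  fixes f g :: "'a \<Rightarrow> ennreal"
  shows "(\<And>i. i \<in> I \<Longrightarrow> f i \<le> g i) \<Longrightarrow> prod f I \<le> prod g I"
  by (induct I rule: infinite_finite_induct) (auto intro!: mult_mono)

lemma prob_space_unif: "Lr > 0 \<Longrightarrow> prob_space (uniform_measure lborel {0..<Lr::real})"
  by (rule prob_space_uniform_measure) auto

lemma pim_bound:
  fixes Lr Q :: real and W :: "real \<Rightarrow> real \<Rightarrow> real"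
  defines "M \<equiv> uniform_measure lborel {0..<Lr}"
  assumes Lr: "Lr > 0" and Wm[measurable]: "case_prod W \<in> borel_measurable (borel \<Otimes>\<^sub>M borel)"
    and W0: "\<And>y z. 0 \<le> W y z" and A[measurable]: "A \<in> sets borel" and k: "k < n"
    and Wi: "\<And>y. y \<in> A \<Longrightarrow> (\<integral>\<^sup>+z. ennreal (W y z) \<partial>M) \<le> ennreal Q" and Q: "0 \<le> Q"
  shows "(\<integral>\<^sup>+xs. ennreal (indicator A (xs k) * (\<Prod>j\<in>{..<n}-{k}. W (xs k) (xs j))) \<partial>PiM {..<n} (\<lambda>_. M))
     \<le> ennreal (Q^(n-1)) * emeasure M A"
proof -
  have pM: "prob_space M" unfolding M_def using Lr by (rule prob_space_unif)
  interpret P: product_sigma_finite "\<lambda>_. M"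
    by (simp add: product_sigma_finite_def pM prob_space_imp_sigma_finite)
  have sM[simp, measurable_cong]: "sets M = sets borel" unfolding M_def by simp
  have spM[simp]: "space M = UNIV" unfolding M_def by simp
  define I where "I = {..<n} - {k}"
  have ins: "{..<n} = insert k I" and kI: "k \<notin> I" and fI: "finite I" using k unfolding I_def by auto
  have cI: "card I = n - 1" using k unfolding I_def by simp
  have mW: "(\<lambda>x. W (f x) (g x)) \<in> borel_measurable N" if "f \<in> borel_measurable N" "g \<in> borel_measurable N" for f g N
    using measurable_compose[OF measurable_Pair[OF that] Wm] by simp
  note mW[measurable]
  have meas: "(\<lambda>xs. ennreal (indicator A (xs k) * (\<Prod>j\<in>I. W (xs k) (xs j)))) \<in> borel_measurable (PiM (insert k I) (\<lambda>_. M))"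
    by measurable
  have "(\<integral>\<^sup>+xs. ennreal (indicator A (xs k) * (\<Prod>j\<in>{..<n}-{k}. W (xs k) (xs j))) \<partial>PiM {..<n} (\<lambda>_. M))
    = (\<integral>\<^sup>+xs. ennreal (indicator A (xs k) * (\<Prod>j\<in>I. W (xs k) (xs j))) \<partial>PiM (insert k I) (\<lambda>_. M))"
    unfolding I_def using ins I_def by simp
  also have "\<dots> = (\<integral>\<^sup>+y. (\<integral>\<^sup>+x. ennreal (indicator A ((x(k:=y)) k) * (\<Prod>j\<in>I. W ((x(k:=y)) k) ((x(k:=y)) j))) \<partial>PiM I (\<lambda>_. M)) \<partial>M)"
    by (rule P.product_nn_integral_insert_rev[OF fI kI meas])
  also have "\<dots> = (\<integral>\<^sup>+y. indicator A y * (\<Prod>j\<in>I. (\<integral>\<^sup>+z. ennreal (W y z) \<partial>M)) \<partial>M)"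
  proof (rule nn_integral_cong)
    fix y
    have "(\<integral>\<^sup>+x. ennreal (indicator A ((x(k:=y)) k) * (\<Prod>j\<in>I. W ((x(k:=y)) k) ((x(k:=y)) j))) \<partial>PiM I (\<lambda>_. M))
        = (\<integral>\<^sup>+x. indicator A y * (\<Prod>j\<in>I. ennreal (W y (x j))) \<partial>PiM I (\<lambda>_. M))"
    proof (rule nn_integral_cong)
      fix x
      have "(\<Prod>j\<in>I. W ((x(k:=y)) k) ((x(k:=y)) j)) = (\<Prod>j\<in>I. W y (x j))"
        using kI by (intro prod.cong) auto
      then show "ennreal (indicator A ((x(k:=y)) k) * (\<Prod>j\<in>I. W ((x(k:=y)) k) ((x(k:=y)) j)))
          = indicator A y * (\<Prod>j\<in>I. ennreal (W y (x j)))"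
        using W0 by (simp add: ennreal_mult' prod_ennreal prod_nonneg indicator_def)
    qed
    also have "\<dots> = indicator A y * (\<integral>\<^sup>+x. (\<Prod>j\<in>I. ennreal (W y (x j))) \<partial>PiM I (\<lambda>_. M))"
      by (rule nn_integral_cmult) measurable
    also have "(\<integral>\<^sup>+x. (\<Prod>j\<in>I. ennreal (W y (x j))) \<partial>PiM I (\<lambda>_. M)) = (\<Prod>j\<in>I. (\<integral>\<^sup>+z. ennreal (W y z) \<partial>M))"
      by (rule P.product_nn_integral_prod[OF fI]) measurable
    finally show "(\<integral>\<^sup>+x. ennreal (indicator A ((x(k:=y)) k) * (\<Prod>j\<in>I. W ((x(k:=y)) k) ((x(k:=y)) j))) \<partial>PiM I (\<lambda>_. M))
        = indicator A y * (\<Prod>j\<in>I. (\<integral>\<^sup>+z. ennreal (W y z) \<partial>M))" .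
  qed
  also have "\<dots> \<le> (\<integral>\<^sup>+y. ennreal (Q^(n-1)) * indicator A y \<partial>M)"
  proof (rule nn_integral_mono)
    fix y
    show "indicator A y * (\<Prod>j\<in>I. (\<integral>\<^sup>+z. ennreal (W y z) \<partial>M)) \<le> ennreal (Q^(n-1)) * indicator A y"
    proof (cases "y \<in> A")
      case True
      have "(\<Prod>j\<in>I. (\<integral>\<^sup>+z. ennreal (W y z) \<partial>M)) \<le> (\<Prod>j\<in>I. ennreal Q)"
        by (rule prod_mono_ennreal) (rule Wi[OF True])
      also have "\<dots> = ennreal (Q^(n-1))" using Q cI by (simp add: ennreal_power)
      finally show ?thesis using True by simp
    qed simp
  qed
  also have "\<dots> = ennreal (Q^(n-1)) * emeasure M A"
    by (rule nn_integral_cmult_indicator) simp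
  finally show ?thesis .
qed



lemma integral_le_nn:
  fixes f :: "'a \<Rightarrow> real"
  assumes "\<And>x. 0 \<le> f x" "(\<integral>\<^sup>+x. ennreal (f x) \<partial>M) \<le> ennreal c" "0 \<le> c"
  shows "integral\<^sup>L M f \<le> c"
proof (cases "integrable M f")
  case True
  have "integral\<^sup>L M f = enn2real (\<integral>\<^sup>+x. ennreal (f x) \<partial>M)"
    using True assms(1) by (subst integral_eq_nn_integral) auto
  also have "\<dots> \<le> c" using assms(2,3)
    using enn2real_mono[OF assms(2)] assms(3) by simp
  finally show ?thesis .
next
  case False then show ?thesis using assms(3) by (simp add: not_integrable_integral_eq)
qed

lemma W_one:
  fixes g :: "real \<Rightarrow> real" and Lr G0 :: real
  assumes Lr: "Lr > 0" and gm[measurable]: "g \<in> borel_measurable borel" and g01: "\<And>z. 0 \<le> g z \<and> g z \<le> 1"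
    and G0: "ennreal G0 \<le> (\<integral>\<^sup>+z. ennreal (g z * indicator {0..<Lr} z) \<partial>lborel)" "0 \<le> G0"
  shows "(\<integral>\<^sup>+z. ennreal (1 - g z * indicator {0..<Lr} z) \<partial>uniform_measure lborel {0..<Lr})
      \<le> ennreal ((Lr - G0)/Lr)" and "G0 \<le> Lr"
proof -
  define a where "a = (\<integral>\<^sup>+z. ennreal ((1 - g z) * indicator {0..<Lr} z) \<partial>lborel)"
  define b where "b = (\<integral>\<^sup>+z. ennreal (g z * indicator {0..<Lr} z) \<partial>lborel)"
  have "a + b = (\<integral>\<^sup>+z. ennreal ((1 - g z) * indicator {0..<Lr} z) + ennreal (g z * indicator {0..<Lr} z) \<partial>lborel)"
    unfolding a_def b_def by (rule nn_integral_add[symmetric]) auto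
  also have "\<dots> = (\<integral>\<^sup>+z. indicator {0..<Lr} z \<partial>lborel)"
    using g01 by (intro nn_integral_cong) (auto simp: indicator_def simp flip: ennreal_plus)
  also have "\<dots> = ennreal Lr" using Lr by simp
  finally have ab: "a + b = ennreal Lr" .
  have "a \<le> a + b" by simp
  then have "a \<le> ennreal Lr" using ab by simp
  then have "a \<noteq> \<top>" by (cases "a = \<top>") (auto simp: top_unique)
  define a' where "a' = enn2real a"
  have a': "a = ennreal a'" "0 \<le> a'" using \<open>a \<noteq> \<top>\<close> unfolding a'_def by (auto simp: ennreal_enn2real_if)
  have "ennreal (a' + G0) \<le> a + b" using a' G0 unfolding b_def by (simp add: ennreal_plus add_left_mono)
  then have aG: "a' + G0 \<le> Lr" using ab Lr by (simp add: ennreal_le_iff)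
  then show "G0 \<le> Lr" using a' by simp
  have "(\<integral>\<^sup>+z. ennreal (1 - g z * indicator {0..<Lr} z) \<partial>uniform_measure lborel {0..<Lr})
      = (\<integral>\<^sup>+z. ennreal (1 - g z * indicator {0..<Lr} z) * indicator {0..<Lr} z \<partial>lborel) / emeasure lborel {0..<Lr}"
    by (rule nn_integral_uniform_measure) auto
  also have "(\<integral>\<^sup>+z. ennreal (1 - g z * indicator {0..<Lr} z) * indicator {0..<Lr} z \<partial>lborel) = a"
    unfolding a_def by (intro nn_integral_cong) (auto simp: indicator_def)
  also have "emeasure lborel {0..<Lr} = ennreal Lr" using Lr by simp
  also have "a / ennreal Lr = ennreal (a' / Lr)" using a' Lr by (simp add: divide_ennreal)
  also have "\<dots> \<le> ennreal ((Lr - G0)/Lr)" using aG Lr by (intro ennreal_leI divide_right_mono) auto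
  finally show "(\<integral>\<^sup>+z. ennreal (1 - g z * indicator {0..<Lr} z) \<partial>uniform_measure lborel {0..<Lr})
      \<le> ennreal ((Lr - G0)/Lr)" .
qed



lemma clip01: "0 \<le> clip p" "clip p \<le> 1" by (auto simp: clip_def)

lemma seg_sub: assumes "m > 0" "i \<in> {1..m*L}" shows "seg m i \<subseteq> {0..<real L}"
proof -
  have "real i \<le> real m * real L" using assms by (simp flip: of_nat_mult)
  then have "real i / real m \<le> real L" using assms by (simp add: field_simps)
  moreover have "0 \<le> (real i - 1) / real m" using assms by auto
  ultimately show ?thesis unfolding seg_def by auto
qed

lemma emeasure_seg: assumes "m > 0" shows "emeasure lborel (seg m i) = ennreal (1 / real m)"
proof -
  have "(real i - 1) / real m \<le> real i / real m" using assms by (simp add: divide_right_mono)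
  then show ?thesis unfolding seg_def using assms by (simp add: diff_divide_distrib)
qed

lemma int_n_bound:
  fixes H :: "real \<Rightarrow> real" and tau alpha G0 :: real and L m i n :: nat
  assumes Hm: "set_borel_measurable borel {0..} H"
    and Hb: "\<forall>x\<ge>0. 0 \<le> H x \<and> H x \<le> 1"
    and L: "L > 0" and m: "m > 0" and i: "i \<in> {1..m*L}"
    and R: "RL H tau L > 0" and D: "RL H tau L powr (1 + 1/alpha) < real L / 2"
    and G0: "ennreal G0 \<le> ennreal (2 * RL H tau L) *
        (\<integral>\<^sup>+u. ennreal (indicator {0..} u * H u * indicator {0<..RL H tau L powr (1 + 1/alpha) / RL H tau L} u) \<partial>lborel)"
    and G00: "0 \<le> G0"
  shows "(\<integral>xs. measure_pmf.prob (edge_pmf H tau alpha L n xs) {E. single_isolated (seg m i) n xs E} \<partial>point_positions L n)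
         \<le> real n * (((real L - G0) / real L) ^ (n - 1) * (1 / real m / real L))"
    and "G0 \<le> real L"
proof -
  define Lr where "Lr = real L"
  define R where "R = RL H tau L"
  define D where "D = R powr (1 + 1/alpha)"
  define H' where "H' s = indicator {0..} s * H s" for s
  define A where "A = seg m i"
  define M where "M = uniform_measure lborel {0..<Lr}"
  define Q where "Q = (Lr - G0) / Lr"
  have Lr: "Lr > 0" using L unfolding Lr_def by simp
  have H'm[measurable]: "H' \<in> borel_measurable borel"
    using Hm unfolding set_borel_measurable_def H'_def by simp
  have H'b: "0 \<le> H' s \<and> H' s \<le> 1" for s using Hb unfolding H'_def by (auto simp: indicator_def)
  define h' where "h' y z = H' (torus_dist Lr y z / R) * (if torus_dist Lr y z \<le> D then 1 else 0)" for y z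
  define W where "W y z = 1 - clip (h' y z) * indicator {0..<Lr} z" for y z
  have Wm[measurable]: "case_prod W \<in> borel_measurable (borel \<Otimes>\<^sub>M borel)"
    unfolding W_def h'_def clip_def torus_dist_def by measurable
  have W0: "0 \<le> W y z" for y z using clip01[of "h' y z"] unfolding W_def by (auto simp: indicator_def)
  have Asub: "A \<subseteq> {0..<Lr}" unfolding A_def Lr_def using seg_sub[OF m i] .
  have Ameas[measurable]: "A \<in> sets borel" unfolding A_def seg_def by simp
  have RR: "R > 0" using R unfolding R_def .
  have DD: "0 \<le> D" "D < Lr/2" using D unfolding D_def R_def Lr_def by auto
  have G0': "ennreal G0 \<le> ennreal (2*R) * (\<integral>\<^sup>+u. ennreal (H' u * indicator {0<..D/R} u) \<partial>lborel)"
    using G0 unfolding R_def D_def H'_def by (simp add: mult.assoc)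
  have klb': "ennreal G0 \<le> (\<integral>\<^sup>+z. ennreal (clip (h' y z) * indicator {0..<Lr} z) \<partial>lborel)"
    if "y \<in> A" for y
  proof -
    have "0 \<le> y" "y < Lr" using that Asub by auto
    from klb[OF H'm H'b RR DD this] G0' show ?thesis unfolding h'_def by (rule order.trans[rotated])
  qed
  have gm: "(\<lambda>z. clip (h' y z)) \<in> borel_measurable borel" for y
    unfolding h'_def clip_def torus_dist_def by measurable
  have Wi: "(\<integral>\<^sup>+z. ennreal (W y z) \<partial>M) \<le> ennreal Q" if "y \<in> A" for y
    unfolding W_def M_def Q_def
    by (rule W_one(1)[OF Lr gm _ klb'[OF that] G00]) (use clip01 in auto)
  have A_ne: "A \<noteq> {}"
  proof -
    have "(real i - 1) / real m < real i / real m" using m by (simp add: divide_strict_right_mono)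
    then show ?thesis unfolding A_def seg_def by auto
  qed
  then obtain y0 where "y0 \<in> A" by auto
  show G0L: "G0 \<le> real L"
    using W_one(2)[OF Lr gm _ klb'[OF \<open>y0 \<in> A\<close>] G00] clip01 unfolding Lr_def by auto
  have Q0: "0 \<le> Q" using G0L Lr unfolding Q_def Lr_def by simp
  have emA: "emeasure M A = ennreal (1 / real m / Lr)"
  proof -
    have "emeasure M A = emeasure lborel ({0..<Lr} \<inter> A) / emeasure lborel {0..<Lr}"
      unfolding M_def by (rule emeasure_uniform_measure) auto
    also have "{0..<Lr} \<inter> A = A" using Asub by auto
    also have "emeasure lborel A = ennreal (1 / real m)" unfolding A_def by (rule emeasure_seg[OF m])
    also have "emeasure lborel {0..<Lr} = ennreal Lr" using Lr by simp
    finally show ?thesis using Lr by (simp add: divide_ennreal)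
  qed
  define F where "F k xs = indicator A (xs k) * (\<Prod>j\<in>{..<n}-{k}. W (xs k) (xs j))" for k xs
  have Fk: "(\<integral>\<^sup>+xs. ennreal (F k xs) \<partial>PiM {..<n} (\<lambda>_. M)) \<le> ennreal (Q^(n-1) * (1 / real m / Lr))"
    if "k < n" for k
  proof -
    have e: "ennreal (Q^(n-1) * (1 / real m / Lr)) = ennreal (Q^(n-1)) * emeasure M A"
      unfolding emA using Q0 Lr by (intro ennreal_mult) auto
    show ?thesis unfolding e F_def M_def
      by (rule pim_bound[OF Lr Wm W0 Ameas that Wi[unfolded M_def] Q0])
  qed
  have sM[measurable_cong]: "sets M = sets borel" unfolding M_def by simp
  have mW[measurable]: "(\<lambda>x. W (f x) (g x)) \<in> borel_measurable N" if "f \<in> borel_measurable N" "g \<in> borel_measurable N" for f g N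
    using measurable_compose[OF measurable_Pair[OF that] Wm] by simp
  have Fm: "(\<lambda>xs. ennreal (F k xs)) \<in> borel_measurable (PiM {..<n} (\<lambda>_. M))" if "k < n" for k
  proof -
    define I where "I = {..<n} - {k}"
    have ins: "{..<n} = insert k I" using that unfolding I_def by auto
    have m1: "(\<lambda>xs. ennreal (indicator A (xs k) * (\<Prod>j\<in>I. W (xs k) (xs j)))) \<in> borel_measurable (PiM (insert k I) (\<lambda>_. M))"
      by measurable
    show ?thesis using m1 unfolding F_def I_def[symmetric] ins[symmetric] .
  qed
  have hLeq: "1 - clip (hL H tau alpha L y z) \<le> W y z" if "y \<in> A" for y z
  proof (cases "z \<in> {0..<Lr}")
    case True
    have y: "0 \<le> y" "y < Lr" using that Asub by auto
    have "0 \<le> torus_dist Lr y z" using y True unfolding torus_dist_def by auto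
    then have "hL H tau alpha L y z = h' y z"
      unfolding hL_def h'_def H'_def Lr_def R_def D_def using RR unfolding R_def by (simp add: indicator_def)
    then show ?thesis unfolding W_def using True by simp
  next
    case False then show ?thesis unfolding W_def using clip01 by simp
  qed
  have pw: "measure_pmf.prob (edge_pmf H tau alpha L n xs) {E. single_isolated A n xs E} \<le> (\<Sum>k<n. F k xs)" for xs
  proof -
    have "(\<Sum>k<n. indicator A (xs k) * (\<Prod>j\<in>{..<n}-{k}. (1 - clip (hL H tau alpha L (xs k) (xs j)))))
        \<le> (\<Sum>k<n. F k xs)"
      unfolding F_def
    proof (rule sum_mono)
      fix k
      show "indicator A (xs k) * (\<Prod>j\<in>{..<n}-{k}. (1 - clip (hL H tau alpha L (xs k) (xs j))))
          \<le> indicator A (xs k) * (\<Prod>j\<in>{..<n}-{k}. W (xs k) (xs j))"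
      proof (cases "xs k \<in> A")
        case True
        have "(\<Prod>j\<in>{..<n}-{k}. (1 - clip (hL H tau alpha L (xs k) (xs j)))) \<le> (\<Prod>j\<in>{..<n}-{k}. W (xs k) (xs j))"
          by (rule prod_mono) (use clip01 hLeq[OF True] in auto)
        then show ?thesis using True by (simp add: indicator_def)
      qed simp
    qed
    then show ?thesis using prob_single_isolated_le[of H tau alpha L n xs A] by linarith
  qed
  have "(\<integral>\<^sup>+xs. ennreal (measure_pmf.prob (edge_pmf H tau alpha L n xs) {E. single_isolated A n xs E}) \<partial>PiM {..<n} (\<lambda>_. M))
      \<le> (\<integral>\<^sup>+xs. (\<Sum>k<n. ennreal (F k xs)) \<partial>PiM {..<n} (\<lambda>_. M))"
  proof (rule nn_integral_mono)
    fix xs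
    have "0 \<le> F k xs" for k unfolding F_def using W0 by (intro mult_nonneg_nonneg prod_nonneg) auto
    then show "ennreal (measure_pmf.prob (edge_pmf H tau alpha L n xs) {E. single_isolated A n xs E}) \<le> (\<Sum>k<n. ennreal (F k xs))"
    proof -
      have "(\<Sum>k<n. ennreal (F k xs)) = ennreal (\<Sum>k<n. F k xs)"
        by (rule sum_ennreal) (use \<open>\<And>k. 0 \<le> F k xs\<close> in auto)
      then show ?thesis using pw[of xs] by (simp add: ennreal_leI)
    qed
  qed
  also have "\<dots> = (\<Sum>k<n. (\<integral>\<^sup>+xs. ennreal (F k xs) \<partial>PiM {..<n} (\<lambda>_. M)))"
    by (rule nn_integral_sum) (use Fm in auto)
  also have "\<dots> \<le> (\<Sum>k<n. ennreal (Q^(n-1) * (1 / real m / Lr)))"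
    by (rule sum_mono) (use Fk in auto)
  also have "\<dots> = ennreal (real n * (Q^(n-1) * (1 / real m / Lr)))"
    using Q0 Lr by (subst sum_ennreal) auto
  finally have nn: "(\<integral>\<^sup>+xs. ennreal (measure_pmf.prob (edge_pmf H tau alpha L n xs) {E. single_isolated A n xs E}) \<partial>PiM {..<n} (\<lambda>_. M))
      \<le> ennreal (real n * (Q^(n-1) * (1 / real m / Lr)))" .
  show "(\<integral>xs. measure_pmf.prob (edge_pmf H tau alpha L n xs) {E. single_isolated (seg m i) n xs E} \<partial>point_positions L n)
         \<le> real n * (((real L - G0) / real L) ^ (n - 1) * (1 / real m / real L))"
    using integral_le_nn[OF _ nn] Q0 Lr unfolding point_positions_def M_def A_def Q_def Lr_def by simp
qed



lemma poisson_series: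
  fixes Lr Q c :: real
  assumes Lr: "Lr > 0"
  shows "(\<lambda>n. pmf (poisson_pmf Lr) n * (real n * (Q^(n-1) * (c / Lr)))) sums (exp (-Lr) * exp (Lr * Q) * c)"
proof -
  have "(\<lambda>k. (exp (-Lr) * c) * ((Lr*Q)^k /\<^sub>R fact k)) sums ((exp (-Lr) * c) * exp (Lr * Q))"
    by (rule sums_mult[OF exp_converges])
  moreover have "(\<lambda>k. pmf (poisson_pmf Lr) (Suc k) * (real (Suc k) * (Q^(Suc k - 1) * (c / Lr))))
      = (\<lambda>k. (exp (-Lr) * c) * ((Lr*Q)^k /\<^sub>R fact k))"
  proof
    fix k
    have aux: "Lr * X / (s * f) * e * (s * (Y * (c / Lr))) = e * c * (X * Y / f)"
      if "s > 0" "f > 0" for s f X Y e :: real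
      using that Lr by (simp add: field_simps)
    have "pmf (poisson_pmf Lr) (Suc k) = Lr * Lr ^ k / (real (Suc k) * fact k) * exp (-Lr)"
      using Lr by (simp add: pmf_poisson del: of_nat_Suc)
    then have "pmf (poisson_pmf Lr) (Suc k) * (real (Suc k) * (Q^(Suc k - 1) * (c / Lr)))
       = Lr * Lr ^ k / (real (Suc k) * fact k) * exp (-Lr) * (real (Suc k) * (Q^k * (c / Lr)))"
      by simp
    also have "\<dots> = exp (-Lr) * c * (Lr ^ k * Q ^ k / fact k)"
      by (rule aux) auto
    finally show "pmf (poisson_pmf Lr) (Suc k) * (real (Suc k) * (Q^(Suc k - 1) * (c / Lr)))
      = (exp (-Lr) * c) * ((Lr*Q)^k /\<^sub>R fact k)"
      by (simp add: power_mult_distrib divide_inverse_commute)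
  qed
  ultimately have "(\<lambda>k. pmf (poisson_pmf Lr) (Suc k) * (real (Suc k) * (Q^(Suc k - 1) * (c / Lr))))
      sums (exp (-Lr) * exp (Lr * Q) * c)" by (simp add: ac_simps)
  then show ?thesis by (subst (asm) sums_Suc_iff) simp
qed

lemma p_iso_bound:
  fixes H :: "real \<Rightarrow> real" and tau alpha G0 :: real and L m i :: nat
  assumes Hm: "set_borel_measurable borel {0..} H"
    and Hb: "\<forall>x\<ge>0. 0 \<le> H x \<and> H x \<le> 1"
    and L: "L > 0" and m: "m > 0" and i: "i \<in> {1..m*L}"
    and R: "RL H tau L > 0" and D: "RL H tau L powr (1 + 1/alpha) < real L / 2"
    and G0: "ennreal G0 \<le> ennreal (2 * RL H tau L) *
        (\<integral>\<^sup>+u. ennreal (indicator {0..} u * H u * indicator {0<..RL H tau L powr (1 + 1/alpha) / RL H tau L} u) \<partial>lborel)"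
    and G00: "0 \<le> G0"
  shows "p_iso H tau alpha m L i \<le> exp (-G0) / real m" "0 \<le> p_iso H tau alpha m L i"
proof -
  define Lr where "Lr = real L"
  define Q where "Q = (Lr - G0) / Lr"
  have Lr: "Lr > 0" using L unfolding Lr_def by simp
  define t where "t n = pmf (poisson_pmf Lr) n *
        (\<integral>xs. measure_pmf.prob (edge_pmf H tau alpha L n xs) {E. single_isolated (seg m i) n xs E} \<partial>point_positions L n)" for n
  define b where "b n = pmf (poisson_pmf Lr) n * (real n * (Q^(n-1) * ((1 / real m) / Lr)))" for n
  have bs: "b sums (exp (-Lr) * exp (Lr * Q) * (1 / real m))"
    unfolding b_def by (rule poisson_series[OF Lr])
  have "exp (-Lr) * exp (Lr * Q) = exp (-G0)" using Lr unfolding Q_def by (simp add: exp_add[symmetric] field_simps)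
  then have bs': "b sums (exp (-G0) / real m)" using bs by simp
  have t0: "0 \<le> t n" for n unfolding t_def by (intro mult_nonneg_nonneg integral_nonneg) auto
  have tb: "t n \<le> b n" for n
    unfolding t_def b_def Q_def Lr_def
    by (intro mult_left_mono int_n_bound(1)[OF Hm Hb L m i R D G0 G00]) auto
  have st: "summable t"
    by (rule summable_comparison_test'[OF sums_summable[OF bs']]) (use t0 tb in auto)
  have pt: "p_iso H tau alpha m L i = suminf t" unfolding p_iso_def t_def Lr_def ..
  show "p_iso H tau alpha m L i \<le> exp (-G0) / real m"
    unfolding pt using suminf_le[OF tb st sums_summable[OF bs']] sums_unique[OF bs'] by simp
  show "0 \<le> p_iso H tau alpha m L i" unfolding pt by (rule suminf_nonneg[OF st t0])
qed



lemma card_centre_bound: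
  fixes S :: "nat set" and a b :: real
  assumes fin: "finite S" and m: "m > 0"
    and S: "\<And>j. j \<in> S \<Longrightarrow> a \<le> centre m j \<and> centre m j \<le> b"
  shows "real (card S) \<le> real m * max 0 (b - a) + 1"
proof (cases "S = {}")
  case True then show ?thesis using m by simp
next
  case False
  define lo where "lo = Min S"
  define hi where "hi = Max S"
  have lo: "lo \<in> S" and hi: "hi \<in> S" using False fin unfolding lo_def hi_def by auto
  have sub: "S \<subseteq> {lo..hi}" using fin unfolding lo_def hi_def by auto
  have "card S \<le> card {lo..hi}" by (rule card_mono) (use sub in auto)
  also have "card {lo..hi} = Suc hi - lo" by simp
  finally have c1: "real (card S) \<le> real hi - real lo + 1" using hi lo sub by auto
  have "a \<le> (real lo - 1/2) / real m" "(real hi - 1/2) / real m \<le> b"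
    using S[OF lo] S[OF hi] unfolding centre_def by auto
  then have "(real hi - 1/2) / real m - (real lo - 1/2) / real m \<le> b - a" by linarith
  then have "(real hi - real lo) / real m \<le> b - a" by (simp add: diff_divide_distrib)
  then have "real hi - real lo \<le> real m * (b - a)" using m by (simp add: divide_le_eq mult.commute)
  then show ?thesis using c1 m by (smt (verit) mult_left_mono of_nat_0_le_iff)
qed

lemma centre_range: assumes "m > 0" "j \<in> {1..m*L}" shows "0 \<le> centre m j" "centre m j \<le> real L"
proof -
  have "real j \<le> real m * real L" using assms by (simp flip: of_nat_mult)
  then have "real j - 1/2 \<le> real m * real L" by simp
  then show "centre m j \<le> real L" unfolding centre_def using assms by (simp add: divide_le_eq mult.commute)
  show "0 \<le> centre m j" unfolding centre_def using assms by auto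
qed

lemma card_B_bound:
  assumes m: "m > 0" and i: "i \<in> Gamma_idx m L" and D: "0 \<le> RL H tau L powr (1 + 1/alpha)"
  shows "real (card (B_idx H tau alpha m L i)) \<le> 12 * RL H tau L powr (1 + 1/alpha) * real m + 3"
proof -
  define E where "E = 3 * RL H tau L powr (1 + 1/alpha)"
  define c where "c = centre m"
  define G where "G = Gamma_idx m L"
  have E0: "0 \<le> E" using D unfolding E_def by simp
  have cr: "0 \<le> c j" "c j \<le> real L" if "j \<in> G" for j
    using centre_range[OF m] that unfolding c_def G_def Gamma_idx_def by auto
  define S1 where "S1 = {j\<in>G. c i - E \<le> c j \<and> c j \<le> c i + E}"
  define S2 where "S2 = {j\<in>G. c i + real L - E \<le> c j \<and> c j \<le> real L}"
  define S3 where "S3 = {j\<in>G. 0 \<le> c j \<and> c j \<le> c i - real L + E}"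
  have finG: "finite G" unfolding G_def Gamma_idx_def by simp
  have fin: "finite S1" "finite S2" "finite S3" using finG unfolding S1_def S2_def S3_def by auto
  have sub: "B_idx H tau alpha m L i \<subseteq> S1 \<union> S2 \<union> S3"
  proof
    fix j assume j: "j \<in> B_idx H tau alpha m L i"
    then have jG: "j \<in> G" and td: "torus_dist (real L) (c i) (c j) \<le> E"
      unfolding B_idx_def G_def c_def E_def by auto
    show "j \<in> S1 \<union> S2 \<union> S3"
    proof (cases "\<bar>c i - c j\<bar> \<le> E")
      case True then show ?thesis using jG unfolding S1_def by auto
    next
      case False
      then have "real L - \<bar>c i - c j\<bar> \<le> E" using td unfolding torus_dist_def by auto
      then show ?thesis using jG cr[OF jG] unfolding S2_def S3_def by (cases "c j \<ge> c i") auto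
    qed
  qed
  have "card (B_idx H tau alpha m L i) \<le> card (S1 \<union> S2 \<union> S3)"
    by (rule card_mono[OF _ sub]) (use fin in auto)
  also have "\<dots> \<le> card S1 + card S2 + card S3"
    by (metis card_Un_le add_le_mono1 order_trans)
  finally have "real (card (B_idx H tau alpha m L i)) \<le> real (card S1) + real (card S2) + real (card S3)"
    by linarith
  moreover have "real (card S1) \<le> real m * max 0 ((c i + E) - (c i - E)) + 1"
    by (rule card_centre_bound[OF fin(1) m]) (auto simp: S1_def c_def)
  moreover have "real (card S2) \<le> real m * max 0 (real L - (c i + real L - E)) + 1"
    by (rule card_centre_bound[OF fin(2) m]) (auto simp: S2_def c_def)
  moreover have "real (card S3) \<le> real m * max 0 ((c i - real L + E) - 0) + 1"
    by (rule card_centre_bound[OF fin(3) m]) (auto simp: S3_def c_def)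
  moreover have "max 0 ((c i + E) - (c i - E)) = 2 * E" using E0 by simp
  moreover have "max 0 (real L - (c i + real L - E)) \<le> E" using E0 cr[of i] i unfolding G_def by auto
  moreover have "max 0 ((c i - real L + E) - 0) \<le> E" using E0 cr[of i] i unfolding G_def by auto
  ultimately have "real (card (B_idx H tau alpha m L i)) \<le> real m * (2*E) + 1 + (real m * E + 1) + (real m * E + 1)"
    using m by (smt (verit) mult_left_mono of_nat_0_le_iff)
  then show ?thesis unfolding E_def by (simp add: algebra_simps)
qed

lemma b1_bound:
  fixes P :: real
  assumes m: "m > 0" and D: "0 \<le> RL H tau L powr (1 + 1/alpha)"
    and p: "\<And>i. i \<in> Gamma_idx m L \<Longrightarrow> 0 \<le> p_iso H tau alpha m L i \<and> p_iso H tau alpha m L i \<le> P"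
  shows "b1 H tau alpha m L \<le> real m * real L * (12 * RL H tau L powr (1 + 1/alpha) * real m + 3) * P^2"
proof -
  define K where "K = 12 * RL H tau L powr (1 + 1/alpha) * real m + 3"
  have P0: "0 \<le> P" if "Gamma_idx m L \<noteq> {}" using p that by force
  have Bsub: "B_idx H tau alpha m L i \<subseteq> Gamma_idx m L" for i unfolding B_idx_def by auto
  have "b1 H tau alpha m L \<le> (\<Sum>i\<in>Gamma_idx m L. \<Sum>j\<in>B_idx H tau alpha m L i. P * P)"
    unfolding b1_def
  proof (intro sum_mono)
    fix i j assume i: "i \<in> Gamma_idx m L" and j: "j \<in> B_idx H tau alpha m L i"
    have j': "j \<in> Gamma_idx m L" using j Bsub by auto
    show "p_iso H tau alpha m L i * p_iso H tau alpha m L j \<le> P * P"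
      using p[OF i] p[OF j'] by (intro mult_mono) auto
  qed
  also have "\<dots> = (\<Sum>i\<in>Gamma_idx m L. real (card (B_idx H tau alpha m L i)) * P^2)"
    by (simp add: power2_eq_square)
  also have "\<dots> \<le> (\<Sum>i\<in>Gamma_idx m L. K * P^2)"
    by (intro sum_mono mult_right_mono) (use card_B_bound[OF m _ D] in \<open>auto simp: K_def\<close>)
  also have "\<dots> = real m * real L * K * P^2" unfolding Gamma_idx_def by simp
  finally show ?thesis unfolding K_def .
qed



lemma k0_exists:
  fixes H :: "real \<Rightarrow> real"
  assumes Hm: "set_borel_measurable borel {0..} H"
    and Hb: "\<forall>x\<ge>0. 0 \<le> H x \<and> H x \<le> 1"
    and Hi: "set_integrable lborel {0..} H"
    and I0: "(LBINT x:{0..}. H x) > 0"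
  shows "\<exists>k0::nat. ennreal (3 * (LBINT x:{0..}. H x) / 4)
     < (\<integral>\<^sup>+u. ennreal (indicator {0..} u * H u * indicator {0<..real k0} u) \<partial>lborel)"
proof -
  define I where "I = (LBINT x:{0..}. H x)"
  define H' where "H' u = indicator {0..} u * H u" for u
  have H'm[measurable]: "H' \<in> borel_measurable borel"
    using Hm unfolding set_borel_measurable_def H'_def by simp
  have H'0: "0 \<le> H' u" for u using Hb unfolding H'_def by (auto simp: indicator_def)
  have H'i: "integrable lborel H'" using Hi unfolding set_integrable_def H'_def by simp
  have nnI: "(\<integral>\<^sup>+u. ennreal (H' u) \<partial>lborel) = ennreal I"
  proof -
    have IH': "I = integral\<^sup>L lborel H'" unfolding I_def set_lebesgue_integral_def H'_def by simp
    show ?thesis unfolding IH' by (rule nn_integral_eq_integral[OF H'i]) (use H'0 in auto)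
  qed
  define f where "f k u = ennreal (H' u * indicator {0<..real k} u)" for k :: nat and u
  have inc: "incseq f"
    unfolding incseq_def f_def le_fun_def using H'0
    by (auto intro!: ennreal_leI mult_left_mono simp: indicator_def)
  have fm: "f k \<in> borel_measurable lborel" for k unfolding f_def by measurable
  have lim: "(\<lambda>k. f k u) \<longlonglongrightarrow> ennreal (H' u * indicator {0<..} u)" for u
  proof (cases "u > 0")
    case True
    have "eventually (\<lambda>k. f k u = ennreal (H' u * indicator {0<..} u)) sequentially"
      using eventually_ge_at_top[of "nat \<lceil>u\<rceil>"]
    proof (rule eventually_mono)
      fix k assume "nat \<lceil>u\<rceil> \<le> k"
      then have "u \<le> real k" by linarith
      then show "f k u = ennreal (H' u * indicator {0<..} u)" using True unfolding f_def by (simp add: indicator_def)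
    qed
    then show ?thesis by (rule tendsto_eventually)
  next
    case False
    then show ?thesis unfolding f_def by (simp add: indicator_def)
  qed
  have "(\<lambda>k. integral\<^sup>N lborel (f k)) \<longlonglongrightarrow> (\<integral>\<^sup>+u. ennreal (H' u * indicator {0<..} u) \<partial>lborel)"
    by (rule nn_integral_LIMSEQ[OF inc fm lim])
  also have "(\<integral>\<^sup>+u. ennreal (H' u * indicator {0<..} u) \<partial>lborel) = ennreal I"
    unfolding nnI[symmetric]
    by (rule nn_integral_cong_AE) (use AE_lborel_singleton[of 0] in \<open>auto elim!: eventually_mono simp: indicator_def H'_def\<close>)
  finally have L: "(\<lambda>k. integral\<^sup>N lborel (f k)) \<longlonglongrightarrow> ennreal I" .
  have "ennreal (3 * I / 4) < ennreal I" using I0 unfolding I_def by (simp add: ennreal_lessI)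
  from order_tendstoD(1)[OF L this] obtain k where "ennreal (3 * I / 4) < integral\<^sup>N lborel (f k)"
    by (auto simp: eventually_sequentially)
  then show ?thesis unfolding I_def f_def H'_def by blast
qed

lemma asym1:
  fixes tau I a :: real assumes "tau > 0" "I > 0" "a > 0"
  shows "((\<lambda>x. x * (12 * (ln (tau*x) / (2*I)) powr (1 + 1/a) + 3) * (tau * x) powr (-3/2)) \<longlongrightarrow> 0) at_top"
  using assms by real_asymp

lemma asym2:
  fixes tau I a :: real assumes "tau > 0" "I > 0" "a > 0"
  shows "eventually (\<lambda>x. (ln (tau*x) / (2*I)) powr (1 + 1/a) < x/2) at_top"
  using assms by real_asymp

lemma asym3:
  fixes tau I a :: real assumes "tau > 0" "I > 0" "a > 0"
  shows "filterlim (\<lambda>x. (ln (tau*x) / (2*I)) powr (1/a)) at_top at_top"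
  using assms by real_asymp

lemma asym4:
  fixes tau I :: real assumes "tau > 0" "I > 0"
  shows "eventually (\<lambda>x. ln (tau*x) / (2*I) > 0) at_top"
  using assms by real_asymp

lemma ev_nat: "eventually P at_top \<Longrightarrow> eventually (\<lambda>n::nat. P (real n)) sequentially"
  using filterlim_real_sequentially unfolding filterlim_iff by blast



theorem lemma5:
  fixes H :: "real \<Rightarrow> real" and tau alpha :: real
  assumes "set_borel_measurable borel {0..} H"
    and "\<forall>x\<ge>0. 0 \<le> H x \<and> H x \<le> 1"
    and "set_integrable lborel {0..} H"
    and "(LBINT x:{0..}. (H x)\<^sup>2) < (LBINT x:{0..}. H x)"
    and "tau > 0" and "alpha > 0"
  shows "(\<lambda>L::nat. limsup (\<lambda>m::nat. ereal (b1 H tau alpha m L))) \<longlonglongrightarrow> 0"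
proof -
  note Hm = assms(1) and Hb = assms(2) and Hi = assms(3) and tau = assms(5) and alpha = assms(6)
  define I where "I = (LBINT x:{0..}. H x)"
  have "0 \<le> (LBINT x:{0..}. (H x)\<^sup>2)"
    unfolding set_lebesgue_integral_def by (rule Bochner_Integration.integral_nonneg) (auto simp: indicator_def)
  then have I0: "I > 0" using assms(4) unfolding I_def by linarith
  obtain k0 :: nat where k0: "ennreal (3 * I / 4)
     < (\<integral>\<^sup>+u. ennreal (indicator {0..} u * H u * indicator {0<..real k0} u) \<partial>lborel)"
    using k0_exists[OF Hm Hb Hi] I0 unfolding I_def by blast
  define R where "R L = ln (tau * real L) / (2 * I)" for L :: nat
  have RL_eq: "RL H tau L = R L" for L unfolding RL_def L1norm_def R_def I_def ..
  define u where "u L = real L * (12 * R L powr (1 + 1/alpha) + 3) * exp (- (3 * R L * I))" for L :: nat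
  have ev: "eventually (\<lambda>L. L > 0 \<and> R L > 0 \<and> R L powr (1 + 1/alpha) < real L / 2 \<and> real k0 \<le> R L powr (1/alpha)) sequentially"
  proof -
    have e3: "eventually (\<lambda>x. real k0 \<le> (ln (tau*x) / (2*I)) powr (1/alpha)) at_top"
      using asym3[OF tau I0 alpha] unfolding filterlim_at_top by blast
    show ?thesis
      using ev_nat[OF asym4[OF tau I0]] ev_nat[OF asym2[OF tau I0 alpha]] ev_nat[OF e3]
        eventually_gt_at_top[of "0::nat"]
      unfolding R_def by eventually_elim auto
  qed
  have bound: "0 \<le> b1 H tau alpha m L \<and> b1 H tau alpha m L \<le> u L"
    if L: "L > 0" "R L > 0" "R L powr (1 + 1/alpha) < real L / 2" "real k0 \<le> R L powr (1/alpha)"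
      and m: "m > 0" for L m
  proof -
    define G0 where "G0 = 3 * R L * I / 2"
    have G00: "0 \<le> G0" using L I0 unfolding G0_def by simp
    have T: "RL H tau L powr (1 + 1/alpha) / RL H tau L = R L powr (1/alpha)"
      unfolding RL_eq using L by (simp add: powr_add)
    have mono: "(\<integral>\<^sup>+u. ennreal (indicator {0..} u * H u * indicator {0<..real k0} u) \<partial>lborel)
        \<le> (\<integral>\<^sup>+u. ennreal (indicator {0..} u * H u * indicator {0<..R L powr (1/alpha)} u) \<partial>lborel)"
      using L(4) Hb by (intro nn_integral_mono ennreal_leI) (auto simp: indicator_def)
    have "ennreal G0 = ennreal (2 * R L) * ennreal (3 * I / 4)"
      unfolding G0_def using L I0 by (simp add: ennreal_mult[symmetric])
    also have "\<dots> \<le> ennreal (2 * RL H tau L) *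
        (\<integral>\<^sup>+u. ennreal (indicator {0..} u * H u * indicator {0<..RL H tau L powr (1 + 1/alpha) / RL H tau L} u) \<partial>lborel)"
      unfolding T unfolding RL_eq using k0 mono by (intro mult_left_mono) auto
    finally have G0: "ennreal G0 \<le> \<dots>" .
    have Rpos: "RL H tau L > 0" using L RL_eq by simp
    have Dlt: "RL H tau L powr (1 + 1/alpha) < real L / 2" using L RL_eq by simp
    have p: "0 \<le> p_iso H tau alpha m L i \<and> p_iso H tau alpha m L i \<le> exp (-G0) / real m"
      if "i \<in> Gamma_idx m L" for i
      using p_iso_bound[OF Hm Hb L(1) m _ Rpos Dlt G0 G00] that unfolding Gamma_idx_def by auto
    have b0: "0 \<le> b1 H tau alpha m L"
      unfolding b1_def B_idx_def using p by (intro sum_nonneg mult_nonneg_nonneg) auto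
    have "b1 H tau alpha m L \<le> real m * real L * (12 * RL H tau L powr (1 + 1/alpha) * real m + 3) * (exp (-G0) / real m)^2"
      by (rule b1_bound[OF m _ p]) simp
    also have "\<dots> = real L * (12 * R L powr (1 + 1/alpha) + 3 / real m) * exp (-G0)^2"
      using m unfolding RL_eq by (simp add: field_simps power2_eq_square)
    also have "\<dots> \<le> real L * (12 * R L powr (1 + 1/alpha) + 3) * exp (-G0)^2"
    proof -
      have "3 / real m \<le> 3" using m by (simp add: divide_le_eq)
      then show ?thesis by (intro mult_right_mono mult_left_mono) auto
    qed
    also have "exp (-G0)^2 = exp (- (3 * R L * I))"
      unfolding G0_def by (simp add: power2_eq_square exp_add[symmetric])
    finally show ?thesis unfolding u_def using b0 by simp
  qed
  have ulim: "u \<longlonglongrightarrow> 0"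
  proof -
    have "(\<lambda>L::nat. real L * (12 * (ln (tau * real L) / (2*I)) powr (1 + 1/alpha) + 3) * (tau * real L) powr (-3/2)) \<longlonglongrightarrow> 0"
      by (rule filterlim_compose[OF asym1[OF tau I0 alpha] filterlim_real_sequentially])
    moreover have "eventually (\<lambda>L. real L * (12 * (ln (tau * real L) / (2*I)) powr (1 + 1/alpha) + 3) * (tau * real L) powr (-3/2) = u L) sequentially"
      using eventually_gt_at_top[of "0::nat"]
    proof (rule eventually_mono)
      fix L :: nat assume "L > 0"
      then have "tau * real L > 0" using tau by simp
      then have "(tau * real L) powr (-3/2) = exp (- (3 * R L * I))"
        unfolding R_def powr_def using I0 tau \<open>L > 0\<close> by (simp add: field_simps)
      then show "real L * (12 * (ln (tau * real L) / (2*I)) powr (1 + 1/alpha) + 3) * (tau * real L) powr (-3/2) = u L"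
        unfolding u_def R_def by simp
    qed
    ultimately show ?thesis by (rule Lim_transform_eventually)
  qed
  show ?thesis
  proof (rule tendsto_sandwich[where f="\<lambda>_. 0" and h="\<lambda>L. ereal (u L)"])
    show "eventually (\<lambda>L. 0 \<le> limsup (\<lambda>m. ereal (b1 H tau alpha m L))) sequentially"
      using ev
    proof (rule eventually_mono)
      fix L assume Lc: "L > 0 \<and> R L > 0 \<and> R L powr (1 + 1/alpha) < real L / 2 \<and> real k0 \<le> R L powr (1/alpha)"
      have "b1 H tau alpha m L \<ge> 0" for m
      proof (cases "m > 0")
        case True then show ?thesis using bound Lc by blast
      next
        case False then show ?thesis unfolding b1_def Gamma_idx_def by simp
      qed
      then show "0 \<le> limsup (\<lambda>m. ereal (b1 H tau alpha m L))"
        by (intro le_Limsup) auto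
    qed
    show "eventually (\<lambda>L. limsup (\<lambda>m. ereal (b1 H tau alpha m L)) \<le> ereal (u L)) sequentially"
      using ev
    proof (rule eventually_mono)
      fix L assume Lc: "L > 0 \<and> R L > 0 \<and> R L powr (1 + 1/alpha) < real L / 2 \<and> real k0 \<le> R L powr (1/alpha)"
      have "eventually (\<lambda>m. ereal (b1 H tau alpha m L) \<le> ereal (u L)) sequentially"
        using eventually_gt_at_top[of "0::nat"]
      proof (rule eventually_mono)
        fix m :: nat assume "m > 0"
        then show "ereal (b1 H tau alpha m L) \<le> ereal (u L)" using bound[of L m] Lc by simp
      qed
      then show "limsup (\<lambda>m. ereal (b1 H tau alpha m L)) \<le> ereal (u L)"
        by (rule Limsup_bounded)
    qed
    show "((\<lambda>_. 0::ereal) \<longlongrightarrow> 0) sequentially" by simp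
    show "((\<lambda>L. ereal (u L)) \<longlongrightarrow> 0) sequentially"
      using ulim by (simp add: zero_ereal_def)
  qed
qed

end
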